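(* Let $(D,\mathrm{left},\mathrm{right})$ be an interval domain and $x\in D$ with $\Uparrow x\neq\emptyset$ in $D$. Then for every $\le$-filtered set $S\subseteq\max(D)$ that has an infimum $\bigwedge S$ in $(\max(D),\le)$: if $\bigwedge S\le\mathrm{left}(x)$, then there exists $s\in S$ with $s\le\mathrm{right}(x)$.
   Context: For a poset $(P,\sqsubseteq)$: directed (resp. filtered) sets are nonempty sets in which any two elements have an upper (resp. lower) bound in the set; $\bigsqcup S$ is the supremum; $x\ll y$ iff for every directed $S\subseteq P$ with a supremum, $y\sqsubseteq\bigsqcup S$ implies $x\sqsubseteq s$ for some $s\in S$; $\Uparrow x=\{a: x\ll a\}$, $\Downarrow x=\{a:a\ll x\}$. $P$ is continuous if there is $B\subseteq P$ such that for each $x$, $B\cap\Downarrow x$ contains a directed set with supremum $x$; a continuous dcpo is a continuous poset in which every directed set has a supremum. $\max(P)$ is the set of maximal elements, $x\sqcap y$ the infimum of $\{x,y\}$. The Scott topology consists of upper sets $U$ such that $\bigsqcup S\in U$ implies $S\cap U\ne\emptyset$ for directed $S$. An interval poset is a poset $D$ with functions $\mathrm{left},\mathrm{right}:D\to\max(D)$ such that (only named infima are assumed to exist): (i) $x=\mathrm{left}(x)\sqcap\mathrm{right}(x)$ for all $x$; (ii) if $\mathrm{right}(x)=\mathrm{left}(y)$ then $\mathrm{left}(x\sqcap y)=\mathrm{left}(x)$ and $\mathrm{right}(x\sqcap y)=\mathrm{right}(y)$; (iii) for $p\in\max(D)$ with $x\sqsubseteq p$: $\mathrm{left}(\mathrm{left}(x)\sqcap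 p)=\mathrm{left}(x)$, $\mathrm{right}(\mathrm{left}(x)\sqcap p)=p$, $\mathrm{left}(p\sqcap\mathrm{right}(x))=p$, $\mathrm{right}(p\sqcap\mathrm{right}(x))=\mathrm{right}(x)$. On $\max(D)$ define $a\le b$ iff $a=\mathrm{left}(z)$, $b=\mathrm{right}(z)$ for some $z\in D$; this is a partial order. For $p,q\in\max(D)$ let $[p,\cdot]=\mathrm{left}^{-1}(p)$ and $[\cdot,q]=\mathrm{right}^{-1}(q)$, regarded as subposets of $D$. An interval domain is an interval poset $(D,\mathrm{left},\mathrm{right})$ such that $D$ is a continuous dcpo and: (i) if $p\in\Uparrow x\cap\max(D)$ then $\Uparrow(\mathrm{left}(x)\sqcap p)\ne\emptyset$ and $\Uparrow(p\sqcap\mathrm{right}(x))\ne\emptyset$; (ii) for all $x\in D$ the following are equivalent: (a) $\Uparrow x\ne\emptyset$; (b) for all $y\in[\mathrm{left}(x),\cdot]$ with $y\sqsubseteq x$, $y\ll\mathrm{right}(y)$ in the poset $[\cdot,\mathrm{right}(y)]$; (c) for all $y\in[\cdot,\mathrm{right}(x)]$ with $y\sqsubseteq x$, $y\ll\mathrm{left}(y)$ in the poset $[\mathrm{left}(y),\cdot]$; (iii)(a) for every directed $S\subseteq[p,\cdot]$, $\mathrm{left}(\bigsqcup S)=p$ and $\mathrm{right}(\bigsqcup S)=\mathrm{right}(\bigsqcup T)$ for every directed $T\subseteq[q,\cdot]$ with $\mathrm{right}(T)=\mathrm{right}(S)$ (images); (iii)(b) for every directed $S\subseteq[\cdot,q]$,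 $\mathrm{right}(\bigsqcup S)=q$ and $\mathrm{left}(\bigsqcup S)=\mathrm{left}(\bigsqcup T)$ for every directed $T\subseteq[\cdot,p]$ with $\mathrm{left}(T)=\mathrm{left}(S)$; (iv) for all $x\in D$, $\{y\in\max(D): x\sqsubseteq y\}$ is compact in the relative Scott topology. *)

theory Defs
  imports Main
begin

definition partial_order_on_set :: "'a set \<Rightarrow> ('a \<Rightarrow> 'a \<Rightarrow> bool) \<Rightarrow> bool" where
  "partial_order_on_set D le \<longleftrightarrow>
     (\<forall>x\<in>D. le x x) \<and>
     (\<forall>x\<in>D. \<forall>y\<in>D. le x y \<and> le y x \<longrightarrow> x = y) \<and>
     (\<forall>x\<in>D. \<forall>y\<in>D. \<forall>z\<in>D. le x y \<and> le y z \<longrightarrow> le x z)"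

definition directed_in :: "'a set \<Rightarrow> ('a \<Rightarrow> 'a \<Rightarrow> bool) \<Rightarrow> 'a set \<Rightarrow> bool" where
  "directed_in E le S \<longleftrightarrow> S \<noteq> {} \<and> S \<subseteq> E \<and>
     (\<forall>a\<in>S. \<forall>b\<in>S. \<exists>c\<in>S. le a c \<and> le b c)"

definition filtered_in :: "'a set \<Rightarrow> ('a \<Rightarrow> 'a \<Rightarrow> bool) \<Rightarrow> 'a set \<Rightarrow> bool" where
  "filtered_in E le S \<longleftrightarrow> S \<noteq> {} \<and> S \<subseteq> E \<and>
     (\<forall>a\<in>S. \<forall>b\<in>S. \<exists>c\<in>S. le c a \<and> le c b)"

definition is_sup_in :: "'a set \<Rightarrow> ('a \<Rightarrow> 'a \<Rightarrow> bool) \<Rightarrow> 'a set \<Rightarrow> 'a \<Rightarrow> bool" where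
  "is_sup_in E le S s \<longleftrightarrow> s \<in> E \<and> (\<forall>a\<in>S. le a s) \<and>
     (\<forall>u\<in>E. (\<forall>a\<in>S. le a u) \<longrightarrow> le s u)"

definition is_inf_set_in :: "'a set \<Rightarrow> ('a \<Rightarrow> 'a \<Rightarrow> bool) \<Rightarrow> 'a set \<Rightarrow> 'a \<Rightarrow> bool" where
  "is_inf_set_in E le S m \<longleftrightarrow> m \<in> E \<and> (\<forall>a\<in>S. le m a) \<and>
     (\<forall>u\<in>E. (\<forall>a\<in>S. le u a) \<longrightarrow> le u m)"

definition is_inf_in :: "'a set \<Rightarrow> ('a \<Rightarrow> 'a \<Rightarrow> bool) \<Rightarrow> 'a \<Rightarrow> 'a \<Rightarrow> 'a \<Rightarrow> bool" where
  "is_inf_in E le a b z \<longleftrightarrow> is_inf_set_in E le {a, b} z"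

definition waybelow_in :: "'a set \<Rightarrow> ('a \<Rightarrow> 'a \<Rightarrow> bool) \<Rightarrow> 'a \<Rightarrow> 'a \<Rightarrow> bool" where
  "waybelow_in E le x y \<longleftrightarrow>
     (\<forall>S s. directed_in E le S \<and> is_sup_in E le S s \<and> le y s \<longrightarrow> (\<exists>a\<in>S. le x a))"

definition wayup :: "'a set \<Rightarrow> ('a \<Rightarrow> 'a \<Rightarrow> bool) \<Rightarrow> 'a \<Rightarrow> 'a set" where
  "wayup E le x = {a\<in>E. waybelow_in E le x a}"

definition waydown :: "'a set \<Rightarrow> ('a \<Rightarrow> 'a \<Rightarrow> bool) \<Rightarrow> 'a \<Rightarrow> 'a set" where
  "waydown E le x = {a\<in>E. waybelow_in E le a x}"

definition maxel :: "'a set \<Rightarrow> ('a \<Rightarrow> 'a \<Rightarrow> bool) \<Rightarrow> 'a set" where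
  "maxel D le = {x\<in>D. \<forall>y\<in>D. le x y \<longrightarrow> y = x}"

definition continuous_poset :: "'a set \<Rightarrow> ('a \<Rightarrow> 'a \<Rightarrow> bool) \<Rightarrow> bool" where
  "continuous_poset D le \<longleftrightarrow> partial_order_on_set D le \<and>
     (\<exists>B\<subseteq>D. \<forall>x\<in>D. \<exists>S. S \<subseteq> B \<inter> waydown D le x \<and> directed_in D le S \<and> is_sup_in D le S x)"

definition continuous_dcpo :: "'a set \<Rightarrow> ('a \<Rightarrow> 'a \<Rightarrow> bool) \<Rightarrow> bool" where
  "continuous_dcpo D le \<longleftrightarrow> continuous_poset D le \<and>
     (\<forall>S. directed_in D le S \<longrightarrow> (\<exists>s. is_sup_in D le S s))"

definition scott_open :: "'a set \<Rightarrow> ('a \<Rightarrow> 'a \<Rightarrow> bool) \<Rightarrow> 'a set \<Rightarrow> bool" where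
  "scott_open D le U \<longleftrightarrow> U \<subseteq> D \<and> (\<forall>x\<in>U. \<forall>y\<in>D. le x y \<longrightarrow> y \<in> U) \<and>
     (\<forall>S s. directed_in D le S \<and> is_sup_in D le S s \<and> s \<in> U \<longrightarrow> S \<inter> U \<noteq> {})"

definition scott_compact_rel :: "'a set \<Rightarrow> ('a \<Rightarrow> 'a \<Rightarrow> bool) \<Rightarrow> 'a set \<Rightarrow> 'a set \<Rightarrow> bool" where
  "scott_compact_rel D le M K \<longleftrightarrow> K \<subseteq> M \<and>
     (\<forall>\<U>. (\<forall>U\<in>\<U>. scott_open D le U) \<and> K \<subseteq> \<Union>{U \<inter> M | U. U \<in> \<U>} \<longrightarrow>
        (\<exists>\<F>\<subseteq>\<U>. finite \<F> \<and> K \<subseteq> \<Union>{U \<inter> M | U. U \<in> \<F>}))"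

definition interval_poset :: "'a set \<Rightarrow> ('a \<Rightarrow> 'a \<Rightarrow> bool) \<Rightarrow> ('a \<Rightarrow> 'a) \<Rightarrow> ('a \<Rightarrow> 'a) \<Rightarrow> bool" where
  "interval_poset D le left right \<longleftrightarrow>
     partial_order_on_set D le \<and>
     (\<forall>x\<in>D. left x \<in> maxel D le \<and> right x \<in> maxel D le) \<and>
     (\<forall>x\<in>D. is_inf_in D le (left x) (right x) x) \<and>
     (\<forall>x\<in>D. \<forall>y\<in>D. right x = left y \<longrightarrow>
        (\<exists>z. is_inf_in D le x y z \<and> left z = left x \<and> right z = right y)) \<and>
     (\<forall>x\<in>D. \<forall>p\<in>maxel D le. le x p \<longrightarrow>
        (\<exists>z. is_inf_in D le (left x) p z \<and> left z = left x \<and> right z = p) \<and>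
        (\<exists>z. is_inf_in D le p (right x) z \<and> left z = p \<and> right z = right x))"

definition max_le :: "'a set \<Rightarrow> ('a \<Rightarrow> 'a) \<Rightarrow> ('a \<Rightarrow> 'a) \<Rightarrow> 'a \<Rightarrow> 'a \<Rightarrow> bool" where
  "max_le D left right a b \<longleftrightarrow> (\<exists>z\<in>D. left z = a \<and> right z = b)"

definition left_fibre :: "'a set \<Rightarrow> ('a \<Rightarrow> 'a) \<Rightarrow> 'a \<Rightarrow> 'a set" where
  "left_fibre D left p = {z\<in>D. left z = p}"

definition right_fibre :: "'a set \<Rightarrow> ('a \<Rightarrow> 'a) \<Rightarrow> 'a \<Rightarrow> 'a set" where
  "right_fibre D right q = {z\<in>D. right z = q}"

definition interval_domain :: "'a set \<Rightarrow> ('a \<Rightarrow> 'a \<Rightarrow> bool) \<Rightarrow> ('a \<Rightarrow> 'a) \<Rightarrow> ('a \<Rightarrow> 'a) \<Rightarrow> bool" where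
  "interval_domain D le left right \<longleftrightarrow>
     interval_poset D le left right \<and> continuous_dcpo D le \<and>
     \<comment> \<open>(i)\<close>
     (\<forall>x\<in>D. \<forall>p\<in>wayup D le x \<inter> maxel D le.
        (\<forall>z. is_inf_in D le (left x) p z \<longrightarrow> wayup D le z \<noteq> {}) \<and>
        (\<forall>z. is_inf_in D le p (right x) z \<longrightarrow> wayup D le z \<noteq> {})) \<and>
     \<comment> \<open>(ii)\<close>
     (\<forall>x\<in>D.
        (wayup D le x \<noteq> {} \<longleftrightarrow>
          (\<forall>y\<in>left_fibre D left (left x). le y x \<longrightarrow>
             waybelow_in (right_fibre D right (right y)) le y (right y))) \<and>
        (wayup D le x \<noteq> {} \<longleftrightarrow>
          (\<forall>y\<in>right_fibre D right (right x). le y x \<longrightarrow>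
             waybelow_in (left_fibre D left (left y)) le y (left y)))) \<and>
     \<comment> \<open>(iii)(a)\<close>
     (\<forall>p\<in>maxel D le. \<forall>S s. directed_in D le S \<and> S \<subseteq> left_fibre D left p \<and> is_sup_in D le S s \<longrightarrow>
        left s = p \<and>
        (\<forall>q\<in>maxel D le. \<forall>T t. directed_in D le T \<and> T \<subseteq> left_fibre D left q \<and>
            right ` T = right ` S \<and> is_sup_in D le T t \<longrightarrow> right s = right t)) \<and>
     \<comment> \<open>(iii)(b)\<close>
     (\<forall>q\<in>maxel D le. \<forall>S s. directed_in D le S \<and> S \<subseteq> right_fibre D right q \<and> is_sup_in D le S s \<longrightarrow>
        right s = q \<and>
        (\<forall>p\<in>maxel D le. \<forall>T t. directed_in D le T \<and> T \<subseteq> right_fibre D right p \<and>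
            left ` T = left ` S \<and> is_sup_in D le T t \<longrightarrow> left s = left t)) \<and>
     \<comment> \<open>(iv)\<close>
     (\<forall>x\<in>D. scott_compact_rel D le (maxel D le) {y\<in>maxel D le. le x y})"

end

theory Submission
  imports Defs
begin

lemma ipA: "interval_poset D le left right \<Longrightarrow> x \<in> D \<Longrightarrow> left x \<in> maxel D le \<and> right x \<in> maxel D le"
  unfolding interval_poset_def by (elim conjE) (drule bspec, assumption)
lemma ipB: "interval_poset D le left right \<Longrightarrow> x \<in> D \<Longrightarrow> is_inf_in D le (left x) (right x) x"
  unfolding interval_poset_def by (elim conjE) (drule bspec, assumption)
lemma ipC: "interval_poset D le left right \<Longrightarrow> x \<in> D \<Longrightarrow> y \<in> D \<Longrightarrow> right x = left y \<Longrightarrow>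
        (\<exists>z. is_inf_in D le x y z \<and> left z = left x \<and> right z = right y)"
  unfolding interval_poset_def by (elim conjE) (drule bspec, assumption, drule bspec, assumption, simp)
lemma ipD: "interval_poset D le left right \<Longrightarrow> x \<in> D \<Longrightarrow> p \<in> maxel D le \<Longrightarrow> le x p \<Longrightarrow>
        (\<exists>z. is_inf_in D le p (right x) z \<and> left z = p \<and> right z = right x)"
  unfolding interval_poset_def by (elim conjE) (drule bspec, assumption, drule bspec, assumption, simp)
lemma infD: "is_inf_in D le a b z \<Longrightarrow> z \<in> D \<and> le z a \<and> le z b \<and> (\<forall>u\<in>D. le u a \<and> le u b \<longrightarrow> le u z)"
  unfolding is_inf_in_def is_inf_set_in_def by simp

lemma ip_po: "interval_poset D le left right \<Longrightarrow> partial_order_on_set D le"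
  by (simp add: interval_poset_def)

lemma ip_inf: "interval_poset D le left right \<Longrightarrow> x \<in> D \<Longrightarrow>
   le x (left x) \<and> le x (right x) \<and> left x \<in> maxel D le \<and> right x \<in> maxel D le"
  using ipA[of D le left right x] ipB[of D le left right x] infD[of D le "left x" "right x" x] by blast

lemma ip_uniq:
  assumes "interval_poset D le left right" "a \<in> D" "b \<in> D" "left a = left b" "right a = right b"
  shows "a = b"
proof -
  have ia: "is_inf_in D le (left a) (right a) a" and ib: "is_inf_in D le (left b) (right b) b"
    using ipB[OF assms(1,2)] ipB[OF assms(1,3)] by auto
  have "le a b" "le b a" using infD[OF ia] infD[OF ib] assms(2,3,4,5) by auto
  thus ?thesis using ip_po[OF assms(1)] assms(2,3) unfolding partial_order_on_set_def by blast
qed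

lemma ip_max_lr:
  assumes "interval_poset D le left right" "p \<in> maxel D le"
  shows "left p = p \<and> right p = p"
proof -
  have pD: "p \<in> D" using assms(2) by (simp add: maxel_def)
  from ip_inf[OF assms(1) pD] have "le p (left p)" "le p (right p)" "left p \<in> D" "right p \<in> D"
    by (auto simp: maxel_def)
  thus ?thesis using assms(2) unfolding maxel_def by auto
qed

lemma ip_right_mono:
  assumes ip: "interval_poset D le left right" and "a \<in> D" "b \<in> D" "le a b"
  shows "max_le D left right (right b) (right a)"
proof -
  have po: "partial_order_on_set D le" using ip_po[OF ip] .
  have rb: "right b \<in> maxel D le" "le b (right b)" using ip_inf[OF ip assms(3)] by auto
  have "le a (right b)" using po assms rb unfolding partial_order_on_set_def maxel_def by blast
  then obtain z where z: "is_inf_in D le (right b) (right a) z" "left z = right b" "right z = right a"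
    using ipD[OF ip assms(2) rb(1)] by blast
  have "z \<in> D" using z(1) unfolding is_inf_in_def is_inf_set_in_def by auto
  thus ?thesis using z unfolding max_le_def by blast
qed

lemma ip_antisym:
  assumes ip: "interval_poset D le left right" and am: "a \<in> maxel D le" and bm: "b \<in> maxel D le"
    and ab: "max_le D left right a b" and ba: "max_le D left right b a"
  shows "a = b"
proof -
  obtain z where z: "z \<in> D" "left z = a" "right z = b" using ab unfolding max_le_def by blast
  obtain w where w: "w \<in> D" "left w = b" "right w = a" using ba unfolding max_le_def by blast
  obtain t where t: "is_inf_in D le z w t" "left t = a" "right t = a"
    using ipC[OF ip z(1) w(1)] z w by auto
  have tD: "t \<in> D" and tz: "le t z" using t(1) unfolding is_inf_in_def is_inf_set_in_def by auto
  have "t = a" using ip_uniq[OF ip tD _ ] am ip_max_lr[OF ip am] t by (auto simp: maxel_def)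
  hence "z = a" using tz z(1) am unfolding maxel_def by auto
  thus ?thesis using z ip_max_lr[OF ip am] by auto
qed

theorem mainTheorem11:
  fixes D :: "'a set" and le :: "'a \<Rightarrow> 'a \<Rightarrow> bool" and left right :: "'a \<Rightarrow> 'a"
    and x :: 'a and S :: "'a set" and m :: 'a
  assumes "interval_domain D le left right"
    and "x \<in> D"
    and "wayup D le x \<noteq> {}"
    and "filtered_in (maxel D le) (max_le D left right) S"
    and "is_inf_set_in (maxel D le) (max_le D left right) S m"
    and "max_le D left right m (left x)"
  shows "\<exists>s\<in>S. max_le D left right s (right x)"
proof -
  have ip: "interval_poset D le left right" using assms(1) by (simp add: interval_domain_def)
  have po: "partial_order_on_set D le" using ip_po[OF ip] .
  have mM: "m \<in> maxel D le" and mS: "\<forall>s\<in>S. max_le D left right m s"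
    and mgr: "\<forall>u\<in>maxel D le. (\<forall>a\<in>S. max_le D left right u a) \<longrightarrow> max_le D left right u m"
    using assms(5) unfolding is_inf_set_in_def by auto
  have mD: "m \<in> D" using mM by (simp add: maxel_def)
  have mlr: "left m = m" "right m = m" using ip_max_lr[OF ip mM] by auto
  obtain z0 where z0: "z0 \<in> D" "left z0 = m" "right z0 = left x"
    using assms(6) unfolding max_le_def by blast
  obtain w where w: "is_inf_in D le z0 x w" "left w = m" "right w = right x"
    using ipC[OF ip z0(1) assms(2)] z0 by auto
  have wD: "w \<in> D" and wx: "le w x" using w(1) unfolding is_inf_in_def is_inf_set_in_def by auto
  have ii: "\<forall>x\<in>D.
        (wayup D le x \<noteq> {} \<longleftrightarrow>
          (\<forall>y\<in>left_fibre D left (left x). le y x \<longrightarrow>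
             waybelow_in (right_fibre D right (right y)) le y (right y))) \<and>
        (wayup D le x \<noteq> {} \<longleftrightarrow>
          (\<forall>y\<in>right_fibre D right (right x). le y x \<longrightarrow>
             waybelow_in (left_fibre D left (left y)) le y (left y)))"
    using assms(1) unfolding interval_domain_def by (elim conjE) assumption
  have "wayup D le x \<noteq> {} \<longleftrightarrow> (\<forall>y\<in>right_fibre D right (right x). le y x \<longrightarrow>
             waybelow_in (left_fibre D left (left y)) le y (left y))"
    using bspec[OF ii assms(2)] by (rule conjunct2)
  hence "\<forall>y\<in>right_fibre D right (right x). le y x \<longrightarrow>
             waybelow_in (left_fibre D left (left y)) le y (left y)"
    using assms(3) by simp
  hence wb: "waybelow_in (left_fibre D left m) le w m"
    using wD wx w by (auto simp: right_fibre_def)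
  define F where "F = left_fibre D left m"
  define E where "E = (\<lambda>s. SOME e. e \<in> D \<and> left e = m \<and> right e = s)"
  have E: "E s \<in> D \<and> left (E s) = m \<and> right (E s) = s" if "s \<in> S" for s
  proof -
    have "\<exists>e. e \<in> D \<and> left e = m \<and> right e = s" using mS that unfolding max_le_def by blast
    thus ?thesis unfolding E_def by (rule someI_ex)
  qed
  have Emono: "le (E s) (E s')" if hs: "s \<in> S" "s' \<in> S" "max_le D left right s' s" for s s'
  proof -
    obtain u where u: "u \<in> D" "left u = s'" "right u = s" using hs(3) unfolding max_le_def by blast
    obtain z where z: "is_inf_in D le (E s') u z" "left z = m" "right z = s"
      using ipC[OF ip _ u(1)] E[OF hs(2)] u by auto
    have zD: "z \<in> D" and zl: "le z (E s')" using z(1) unfolding is_inf_in_def is_inf_set_in_def by auto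
    have "z = E s" using ip_uniq[OF ip zD] E[OF hs(1)] z by auto
    thus ?thesis using zl by simp
  qed
  have SM: "S \<subseteq> maxel D le" "S \<noteq> {}" using assms(4) unfolding filtered_in_def by auto
  have dir: "directed_in F le (E ` S)"
    unfolding directed_in_def
  proof (intro conjI)
    show "E ` S \<noteq> {}" using SM by auto
    show "E ` S \<subseteq> F" using E by (auto simp: F_def left_fibre_def)
    show "\<forall>a\<in>E ` S. \<forall>b\<in>E ` S. \<exists>c\<in>E ` S. le a c \<and> le b c"
    proof (intro ballI)
      fix a b assume "a \<in> E ` S" "b \<in> E ` S"
      then obtain sa sb where "sa \<in> S" "sb \<in> S" "a = E sa" "b = E sb" by auto
      then obtain c where "c \<in> S" "max_le D left right c sa" "max_le D left right c sb"
        using assms(4) unfolding filtered_in_def by blast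
      thus "\<exists>c\<in>E ` S. le a c \<and> le b c" using Emono \<open>sa \<in> S\<close> \<open>sb \<in> S\<close> \<open>a = E sa\<close> \<open>b = E sb\<close> by blast
    qed
  qed
  have sup: "is_sup_in F le (E ` S) m"
    unfolding is_sup_in_def
  proof (intro conjI)
    show "m \<in> F" using mD mlr by (simp add: F_def left_fibre_def)
    show "\<forall>a\<in>E ` S. le a m" using E ip_inf[OF ip] by fastforce
    show "\<forall>u\<in>F. (\<forall>a\<in>E ` S. le a u) \<longrightarrow> le m u"
    proof (intro ballI impI)
      fix u assume uF: "u \<in> F" and ub: "\<forall>a\<in>E ` S. le a u"
      have uD: "u \<in> D" and ul: "left u = m" using uF by (auto simp: F_def left_fibre_def)
      have ruM: "right u \<in> maxel D le" using ip_inf[OF ip uD] by auto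
      have "\<forall>s\<in>S. max_le D left right (right u) s"
        using ip_right_mono[OF ip] E ub uD by fastforce
      hence r1: "max_le D left right (right u) m" using mgr ruM by blast
      have r2: "max_le D left right m (right u)" using uD ul unfolding max_le_def by blast
      have "right u = m" using ip_antisym[OF ip ruM mM r1 r2] .
      hence "u = m" using ip_uniq[OF ip uD mD] ul mlr by auto
      thus "le m u" using po mD unfolding partial_order_on_set_def by auto
    qed
  qed
  have "le m m" using po mD unfolding partial_order_on_set_def by auto
  then obtain a where "a \<in> E ` S" "le w a"
    using wb dir sup unfolding waybelow_in_def F_def by blast
  then obtain s where s: "s \<in> S" "le w (E s)" by auto
  have Es: "E s \<in> D" "right (E s) = s" using E[OF s(1)] by auto
  have "max_le D left right (right (E s)) (right w)"
    by (rule ip_right_mono[OF ip wD Es(1) s(2)])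
  hence "max_le D left right s (right x)" unfolding Es(2) w(3) .
  thus ?thesis using s(1) by (rule bexI)
qed

end
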